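(* In continuous time, suppose $\pi_0(1|B)\le\pi_0(1|A)$, and one of the following is applied at all times: the unconstrained policy UN, the AA1 policy, or the AA2 policy. Then $\pi_t(1|B)\le\pi_t(1|A)$ for all $t\ge0$ (the initial advantage is preserved).
   Context: Two groups $A,B$; $\neg j$ is the other group. Group $j$ has qualification profile $\pi_t(1|j)\in[0,1]$, $\pi_t(0|j)=1-\pi_t(1|j)$. Selection rates of a policy $\tau$: $\beta_t(v;j)=\tau(v;j)\pi_t(v|j)$. Dynamics: continuously differentiable $f_0,f_1:[0,1]^2\to[0,1]$; continuous time: $\frac{d}{dt}\pi_t(1|j)=\pi_t(1|j)\big(f_1(\beta_t(0;j),\beta_t(1;j))-1\big)+(1-\pi_t(1|j))f_0(\beta_t(0;j),\beta_t(1;j))$, with the policy at time $t$ determined by the current profiles. UN: $\tau(1;j)=1,\tau(0;j)=0$, selection rates $(0,\pi_t(1|j))$. Group $j$ is advantaged at $t$ if $\pi_t(1|j)\ge\pi_t(1|\neg j)$. AA1 w.r.t. advantaged $j$: selection rates $\beta_t(0;j)=\beta_t(0;\neg j)=0$, $\beta_t(1;j)=\beta_t(1;\neg j)=\pi_t(1|\neg j)$ (i.e. $\tau(1;j)=\pi_t(1|\neg j)/\pi_t(1|j)$, $\tau(1;\neg j)=1$, $\tau(0;\cdot)=0$). AA2 w.r.t. advantaged $j$: $\beta_t(0;j)=0$, $\beta_t(1;j)=\pi_t(1|j)$, $\beta_t(0;\neg j)=\pi_t(1|j)-\pi_t(1|\neg j)$, $\beta_t(1;\neg j)=\pi_t(1|\neg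 j)$ (i.e. $\tau(1;\cdot)=1$, $\tau(0;j)=0$, $\tau(0;\neg j)=(\pi_t(1|j)-\pi_t(1|\neg j))/(1-\pi_t(1|\neg j))$). "Applied at all times" means at each $t$ the policy is taken with respect to the group advantaged at time $t$. *)

theory Defs
  imports "HOL-Analysis.Analysis"
begin

datatype policy = Pol_UN | Pol_AA1 | Pol_AA2

definition unit_square :: "(real \<times> real) set" where
  "unit_square = {0..1} \<times> {0..1}"

definition C1_on_square :: "(real \<times> real \<Rightarrow> real) \<Rightarrow> bool" where
  "C1_on_square f \<longleftrightarrow>
     (\<exists>f' :: real \<times> real \<Rightarrow> (real \<times> real) \<Rightarrow>\<^sub>L real.
        (\<forall>z\<in>unit_square. (f has_derivative blinfun_apply (f' z)) (at z within unit_square))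
        \<and> continuous_on unit_square f')"

text \<open>Selection rates \<open>(\<beta>(0;j), \<beta>(1;j))\<close> of a group \<open>j\<close> with qualification profile
  \<open>x = \<pi>(1|j)\<close>, when the other group has profile \<open>y = \<pi>(1|\<not>j)\<close>; the policy is taken with
  respect to the currently advantaged group (group \<open>j\<close> is advantaged iff \<open>x \<ge> y\<close>;
  on ties both readings agree).\<close>
fun sel_rates :: "policy \<Rightarrow> real \<Rightarrow> real \<Rightarrow> real \<times> real" where
  "sel_rates Pol_UN x y = (0, x)"
| "sel_rates Pol_AA1 x y = (if y \<le> x then (0, y) else (0, x))"
| "sel_rates Pol_AA2 x y = (if y \<le> x then (0, x) else (y - x, x))"

definition drift :: "(real \<times> real \<Rightarrow> real) \<Rightarrow> (real \<times> real \<Rightarrow> real) \<Rightarrow> policy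
                      \<Rightarrow> real \<Rightarrow> real \<Rightarrow> real" where
  "drift f0 f1 pol x y =
     x * (f1 (sel_rates pol x y) - 1) + (1 - x) * f0 (sel_rates pol x y)"

end

theory Submission
  imports Defs
begin

lemma C1_lip:
  assumes "C1_on_square f"
  shows "\<exists>M\<ge>0. \<forall>a\<in>unit_square. \<forall>b\<in>unit_square.
           \<bar>f a - f b\<bar> \<le> M * (\<bar>fst a - fst b\<bar> + \<bar>snd a - snd b\<bar>)"
proof -
  obtain f' :: "real \<times> real \<Rightarrow> (real \<times> real) \<Rightarrow>\<^sub>L real" where
    d: "\<forall>z\<in>unit_square. (f has_derivative blinfun_apply (f' z)) (at z within unit_square)"
    and c: "continuous_on unit_square f'"
    using assms unfolding C1_on_square_def by blast
  have cp: "compact unit_square" unfolding unit_square_def by (intro compact_Times compact_Icc)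
  have "compact (f' ` unit_square)" using c cp by (rule compact_continuous_image)
  then have "bounded (f' ` unit_square)" by (rule compact_imp_bounded)
  then obtain B where B: "\<And>z. z \<in> unit_square \<Longrightarrow> norm (f' z) \<le> B"
    unfolding bounded_iff by blast
  have cv: "convex unit_square" unfolding unit_square_def by (intro convex_Times) (auto simp: convex_real_interval)
  show ?thesis
  proof (intro exI[of _ "max B 0"] conjI ballI)
    fix a b assume a: "a \<in> unit_square" and b: "b \<in> unit_square"
    have "norm (f a - f b) \<le> B * norm (a - b)"
      by (rule differentiable_bound[OF cv, of f "\<lambda>z. blinfun_apply (f' z)"])
         (use d B a b in \<open>auto simp: norm_blinfun.rep_eq[symmetric]\<close>)
    also have "\<dots> \<le> max B 0 * norm (a - b)" by (intro mult_right_mono) auto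
    also have "norm (a - b) \<le> \<bar>fst a - fst b\<bar> + \<bar>snd a - snd b\<bar>"
      using norm_Pair_le[of "fst a - fst b" "snd a - snd b"] by (cases a, cases b) auto
    then have "max B 0 * norm (a - b) \<le> max B 0 * (\<bar>fst a - fst b\<bar> + \<bar>snd a - snd b\<bar>)"
      by (intro mult_left_mono) auto
    finally show "\<bar>f a - f b\<bar> \<le> max B 0 * (\<bar>fst a - fst b\<bar> + \<bar>snd a - snd b\<bar>)" by simp
  qed simp
qed

lemma sel_props:
  assumes "x \<in> {0..1}" "y \<in> {0..1}"
  shows "sel_rates pol x y \<in> unit_square" "sel_rates pol y x \<in> unit_square"
    "\<bar>fst (sel_rates pol x y) - fst (sel_rates pol y x)\<bar>
      + \<bar>snd (sel_rates pol x y) - snd (sel_rates pol y x)\<bar> \<le> 2 * \<bar>x - y\<bar>"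
  using assms by (cases pol; auto simp: unit_square_def)+

lemma drift_lip:
  assumes M0: "M0 \<ge> 0" "\<forall>a\<in>unit_square. \<forall>b\<in>unit_square.
           \<bar>f0 a - f0 b\<bar> \<le> M0 * (\<bar>fst a - fst b\<bar> + \<bar>snd a - snd b\<bar>)"
    and M1: "M1 \<ge> 0" "\<forall>a\<in>unit_square. \<forall>b\<in>unit_square.
           \<bar>f1 a - f1 b\<bar> \<le> M1 * (\<bar>fst a - fst b\<bar> + \<bar>snd a - snd b\<bar>)"
    and r0: "\<forall>z\<in>unit_square. f0 z \<in> {0..1}"
    and r1: "\<forall>z\<in>unit_square. f1 z \<in> {0..1}"
    and x: "x \<in> {0..1}" and y: "y \<in> {0..1}"
  shows "\<bar>drift f0 f1 pol x y - drift f0 f1 pol y x\<bar> \<le> (2 + 2*M0 + 2*M1) * \<bar>x - y\<bar>"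
proof -
  define a where "a = sel_rates pol x y"
  define b where "b = sel_rates pol y x"
  have a: "a \<in> unit_square" and b: "b \<in> unit_square"
    and ab: "\<bar>fst a - fst b\<bar> + \<bar>snd a - snd b\<bar> \<le> 2 * \<bar>x - y\<bar>"
    using sel_props[OF x y, of pol] by (auto simp: a_def b_def)
  have e: "drift f0 f1 pol x y - drift f0 f1 pol y x =
     (x - y) * (f1 a - 1) + y * (f1 a - f1 b) + (y - x) * f0 a + (1 - y) * (f0 a - f0 b)"
    unfolding drift_def a_def b_def by (simp add: algebra_simps)
  have h1: "\<bar>(x - y) * (f1 a - 1)\<bar> \<le> \<bar>x - y\<bar>"
    using r1 a by (auto simp: abs_mult intro!: mult_left_le)
  have h2: "\<bar>(y - x) * f0 a\<bar> \<le> \<bar>x - y\<bar>"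
  proof -
    have "f0 a \<in> {0..1}" using r0 a by blast
    then show ?thesis by (auto simp: abs_mult abs_minus_commute intro!: mult_left_le)
  qed
  have l1: "\<bar>f1 a - f1 b\<bar> \<le> M1 * (2 * \<bar>x - y\<bar>)"
    using M1 a b ab by (meson mult_left_mono order_trans)
  have l0: "\<bar>f0 a - f0 b\<bar> \<le> M0 * (2 * \<bar>x - y\<bar>)"
    using M0 a b ab by (meson mult_left_mono order_trans)
  have h3: "\<bar>y * (f1 a - f1 b)\<bar> \<le> \<bar>f1 a - f1 b\<bar>"
    using y by (auto simp: abs_mult intro!: mult_left_le_one_le)
  have h4: "\<bar>(1 - y) * (f0 a - f0 b)\<bar> \<le> \<bar>f0 a - f0 b\<bar>"
    using y by (auto simp: abs_mult intro!: mult_left_le_one_le)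
  have t: "\<bar>p+q+r+s\<bar> \<le> \<bar>p\<bar>+\<bar>q\<bar>+\<bar>r\<bar>+\<bar>s\<bar>" for p q r s :: real
    by (smt (verit) abs_triangle_ineq)
  have "\<bar>(x - y) * (f1 a - 1) + y * (f1 a - f1 b) + (y - x) * f0 a + (1 - y) * (f0 a - f0 b)\<bar>
     \<le> \<bar>x - y\<bar> + M1 * (2 * \<bar>x - y\<bar>) + \<bar>x - y\<bar> + M0 * (2 * \<bar>x - y\<bar>)"
    by (rule order_trans[OF t]) (rule add_mono[OF add_mono[OF add_mono[OF h1 order_trans[OF h3 l1]] h2] order_trans[OF h4 l0]])
  also have "\<dots> = (2 + 2*M0 + 2*M1) * \<bar>x - y\<bar>" by (simp add: algebra_simps)
  finally show ?thesis unfolding e .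
qed

theorem mainTheorem7:
  fixes f0 f1 :: "real \<times> real \<Rightarrow> real"
    and pA pB :: "real \<Rightarrow> real"
    and pol :: policy
  assumes f0_C1: "C1_on_square f0"
    and f1_C1: "C1_on_square f1"
    and f0_range: "\<forall>z\<in>unit_square. f0 z \<in> {0..1}"
    and f1_range: "\<forall>z\<in>unit_square. f1 z \<in> {0..1}"
    and prof_range: "\<forall>t\<ge>0. pA t \<in> {0..1} \<and> pB t \<in> {0..1}"
    and dynA: "\<forall>t\<ge>0. (pA has_real_derivative drift f0 f1 pol (pA t) (pB t)) (at t within {0..})"
    and dynB: "\<forall>t\<ge>0. (pB has_real_derivative drift f0 f1 pol (pB t) (pA t)) (at t within {0..})"
    and init: "pB 0 \<le> pA 0"
  shows "\<forall>t\<ge>0. pB t \<le> pA t"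
proof -
  obtain M0 where M0: "M0 \<ge> 0" "\<forall>a\<in>unit_square. \<forall>b\<in>unit_square.
           \<bar>f0 a - f0 b\<bar> \<le> M0 * (\<bar>fst a - fst b\<bar> + \<bar>snd a - snd b\<bar>)"
    using C1_lip[OF f0_C1] by blast
  obtain M1 where M1: "M1 \<ge> 0" "\<forall>a\<in>unit_square. \<forall>b\<in>unit_square.
           \<bar>f1 a - f1 b\<bar> \<le> M1 * (\<bar>fst a - fst b\<bar> + \<bar>snd a - snd b\<bar>)"
    using C1_lip[OF f1_C1] by blast
  define K where "K = 2 + 2*M0 + 2*M1"
  define D where "D t = drift f0 f1 pol (pA t) (pB t) - drift f0 f1 pol (pB t) (pA t)" for t
  define w where "w t = (pA t - pB t) * exp (- K * t)" for t
  define W where "W t = (D t - K * (pA t - pB t)) * exp (- K * t)" for t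
  have Dlip: "\<bar>D t\<bar> \<le> K * \<bar>pA t - pB t\<bar>" if "t \<ge> 0" for t
    unfolding D_def K_def
    by (rule drift_lip[OF M0 M1 f0_range f1_range]) (use prof_range that in auto)
  have wder: "(w has_real_derivative W t) (at t within {0..})" if "t \<ge> 0" for t
    unfolding w_def W_def D_def
    using dynA dynB that
    by (auto intro!: derivative_eq_intros simp: algebra_simps)
  have wcont: "continuous_on {0..} w"
    by (rule DERIV_continuous_on[where D=W]) (use wder in auto)
  have Wnn: "W t \<ge> 0" if "t \<ge> 0" "w t \<le> 0" for t
  proof -
    have "pA t - pB t \<le> 0" using that(2) unfolding w_def
      by (simp add: mult_le_0_iff)
    moreover have "K * \<bar>pA t - pB t\<bar> = - (K * (pA t - pB t))"
      using \<open>pA t - pB t \<le> 0\<close> by (simp add: abs_of_nonpos algebra_simps)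
    ultimately have "D t - K * (pA t - pB t) \<ge> 0" using Dlip[OF that(1)] by linarith
    then show ?thesis unfolding W_def by simp
  qed
  have "w t \<ge> 0" if t1: "t \<ge> 0" for t
  proof (rule ccontr)
    assume neg: "\<not> 0 \<le> w t"
    define S where "S = {u. 0 \<le> u \<and> u \<le> t \<and> 0 \<le> w u}"
    have S0: "0 \<in> S" using init t1 unfolding S_def w_def by simp
    have Sbdd: "bdd_above S" unfolding S_def bdd_above_def by auto
    have Scl: "closed S"
    proof -
      have "S = w -` {0..} \<inter> {0..t}" unfolding S_def by auto
      moreover have "continuous_on {0..t} w" using wcont by (rule continuous_on_subset) auto
      ultimately show ?thesis
        using continuous_on_closed_vimage[of "{0..t}" w] closed_atLeast by auto
    qed
    define s where "s = Sup S"
    have sS: "s \<in> S" unfolding s_def using S0 Sbdd Scl closed_contains_Sup by blast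
    have st: "s \<le> t" "0 \<le> s" "0 \<le> w s" using sS unfolding S_def by auto
    have after: "w u < 0" if "s < u" "u \<le> t" for u
    proof (rule ccontr)
      assume "\<not> w u < 0"
      then have "u \<in> S" using that st unfolding S_def by auto
      then have "u \<le> s" unfolding s_def using Sbdd by (rule cSup_upper)
      then show False using that by simp
    qed
    have "w s \<le> w t"
    proof (rule DERIV_nonneg_imp_increasing_open[OF st(1)])
      fix x assume x: "s < x" "x < t"
      have "(w has_real_derivative W x) (at x within {0<..})"
        by (rule has_field_derivative_subset[OF wder]) (use x st in auto)
      then have "(w has_real_derivative W x) (at x)"
        using x st at_within_open[of x "{0<..}"] by simp
      moreover have "W x \<ge> 0" using x st by (intro Wnn) (auto intro: less_imp_le after)
      ultimately show "\<exists>y. (w has_real_derivative y) (at x) \<and> 0 \<le> y" by blast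
    next
      show "continuous_on {s..t} w" using wcont by (rule continuous_on_subset) (use st in auto)
    qed
    then show False using st neg by simp
  qed
  then show ?thesis unfolding w_def by (auto simp: zero_le_mult_iff)
qed

end
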